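(* Let $M$ be a partial $H$-module with partial action $h\otimes m\mapsto h\cdot m$, and let $N$ be a left $H$-module with action $h\otimes n\mapsto hn$. Then $M\otimes N$ is a partial $H$-module via $$h\cdot(m\otimes n)=h_{(1)}\cdot m\otimes h_{(2)}n.$$
   Context: Throughout, $k$ is a field and $H$ is a Hopf algebra over $k$ with bijective antipode $S$ and Sweedler notation $\Delta(h)=h_{(1)}\otimes h_{(2)}$. A partial $H$-module is a vector space $M$ with a linear map $\pi:H\to\mathrm{End}_k(M)$, written $h\cdot m=\pi(h)(m)$, satisfying, for all $h,k\in H$: - $\pi(1_H)=\mathrm{id}$; - $\pi(h)\pi(k_{(1)})\pi(S(k_{(2)}))=\pi(hk_{(1)})\pi(S(k_{(2)}))$; - $\pi(h_{(1)})\pi(S(h_{(2)}))\pi(k)=\pi(h_{(1)})\pi(S(h_{(2)})k)$; - $\pi(h)\pi(S(k_{(1)}))\pi(k_{(2)})=\pi(hS(k_{(1)}))\pi(k_{(2)})$; - $\pi(S(h_{(1)}))\pi(h_{(2)})\pi(k)=\pi(S(h_{(1)}))\pi(h_{(2)}k)$. *)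

theory Defs
  imports Complex_Main
begin

text \<open>An element of A \<otimes>_k B is represented by a formal sum of simple tensors, i.e. a list of
pairs; two lists represent the same tensor iff they are related by the smallest
congruence of the free commutative monoid on A \<times> B making the tensor bilinear and
balanced over k. (Every generator has an additive inverse, so the quotient is the
usual k-tensor product.)\<close>

inductive tens_rel :: "('k::field \<Rightarrow> 'a::ab_group_add \<Rightarrow> 'a) \<Rightarrow> ('k \<Rightarrow> 'b::ab_group_add \<Rightarrow> 'b)
    \<Rightarrow> ('a \<times> 'b) list \<Rightarrow> ('a \<times> 'b) list \<Rightarrow> bool"
  for sa sb where
  tr_refl: "tens_rel sa sb xs xs"
| tr_sym: "tens_rel sa sb xs ys \<Longrightarrow> tens_rel sa sb ys xs"
| tr_trans: "tens_rel sa sb xs ys \<Longrightarrow> tens_rel sa sb ys zs \<Longrightarrow> tens_rel sa sb xs zs"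
| tr_app: "tens_rel sa sb xs ys \<Longrightarrow> tens_rel sa sb us vs \<Longrightarrow> tens_rel sa sb (xs @ us) (ys @ vs)"
| tr_swap: "tens_rel sa sb [x, y] [y, x]"
| tr_addL: "tens_rel sa sb [(a + a', b)] [(a, b), (a', b)]"
| tr_addR: "tens_rel sa sb [(a, b + b')] [(a, b), (a, b')]"
| tr_zero: "tens_rel sa sb [(0, b)] []"
| tr_scal: "tens_rel sa sb [(sa c a, b)] [(a, sb c b)]"

inductive tens3_rel :: "('k::field \<Rightarrow> 'a::ab_group_add \<Rightarrow> 'a) \<Rightarrow> ('k \<Rightarrow> 'b::ab_group_add \<Rightarrow> 'b)
    \<Rightarrow> ('k \<Rightarrow> 'c::ab_group_add \<Rightarrow> 'c)
    \<Rightarrow> ('a \<times> 'b \<times> 'c) list \<Rightarrow> ('a \<times> 'b \<times> 'c) list \<Rightarrow> bool"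
  for sa sb sc where
  t3_refl: "tens3_rel sa sb sc xs xs"
| t3_sym: "tens3_rel sa sb sc xs ys \<Longrightarrow> tens3_rel sa sb sc ys xs"
| t3_trans: "tens3_rel sa sb sc xs ys \<Longrightarrow> tens3_rel sa sb sc ys zs \<Longrightarrow> tens3_rel sa sb sc xs zs"
| t3_app: "tens3_rel sa sb sc xs ys \<Longrightarrow> tens3_rel sa sb sc us vs \<Longrightarrow>
           tens3_rel sa sb sc (xs @ us) (ys @ vs)"
| t3_swap: "tens3_rel sa sb sc [x, y] [y, x]"
| t3_add1: "tens3_rel sa sb sc [(a + a', b, c)] [(a, b, c), (a', b, c)]"
| t3_add2: "tens3_rel sa sb sc [(a, b + b', c)] [(a, b, c), (a, b', c)]"
| t3_add3: "tens3_rel sa sb sc [(a, b, c + c')] [(a, b, c), (a, b, c')]"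
| t3_zero: "tens3_rel sa sb sc [(0, b, c)] []"
| t3_scal2: "tens3_rel sa sb sc [(sa r a, b, c)] [(a, sb r b, c)]"
| t3_scal3: "tens3_rel sa sb sc [(sa r a, b, c)] [(a, b, sc r c)]"

definition tens_scale :: "('k \<Rightarrow> 'a \<Rightarrow> 'a) \<Rightarrow> 'k \<Rightarrow> ('a \<times> 'b) list \<Rightarrow> ('a \<times> 'b) list" where
  "tens_scale sa c xs = map (\<lambda>(a, b). (sa c a, b)) xs"

text \<open>The comultiplication is given in Sweedler form:
delta h is a formal sum representing \<Delta>(h) = h_(1) \<otimes> h_(2) in H \<otimes> H.\<close>

definition hopf_algebra ::
  "('k::field \<Rightarrow> 'h::ring_1 \<Rightarrow> 'h) \<Rightarrow> ('h \<Rightarrow> ('h \<times> 'h) list) \<Rightarrow> ('h \<Rightarrow> 'k) \<Rightarrow> ('h \<Rightarrow> 'h) \<Rightarrow> bool"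
  where
  "hopf_algebra scH delta eps S \<longleftrightarrow>
     \<comment> \<open>k-algebra\<close>
     vector_space scH \<and>
     (\<forall>c a b. scH c (a * b) = scH c a * b \<and> scH c (a * b) = a * scH c b) \<and>
     \<comment> \<open>\<Delta> is k-linear\<close>
     (\<forall>a b. tens_rel scH scH (delta (a + b)) (delta a @ delta b)) \<and>
     (\<forall>c a. tens_rel scH scH (delta (scH c a)) (tens_scale scH c (delta a))) \<and>
     \<comment> \<open>coassociativity\<close>
     (\<forall>h. tens3_rel scH scH scH
            (concat (map (\<lambda>(a, b). map (\<lambda>(a1, a2). (a1, a2, b)) (delta a)) (delta h)))
            (concat (map (\<lambda>(a, b). map (\<lambda>(b1, b2). (a, b1, b2)) (delta b)) (delta h)))) \<and>
     \<comment> \<open>\<epsilon> is k-linear\<close>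
     (\<forall>a b. eps (a + b) = eps a + eps b) \<and> (\<forall>c a. eps (scH c a) = c * eps a) \<and>
     \<comment> \<open>counit\<close>
     (\<forall>h. sum_list (map (\<lambda>(a, b). scH (eps a) b) (delta h)) = h) \<and>
     (\<forall>h. sum_list (map (\<lambda>(a, b). scH (eps b) a) (delta h)) = h) \<and>
     \<comment> \<open>\<Delta> and \<epsilon> are algebra maps\<close>
     tens_rel scH scH (delta 1) [(1, 1)] \<and>
     (\<forall>g h. tens_rel scH scH (delta (g * h))
        (concat (map (\<lambda>(a, b). map (\<lambda>(c, d). (a * c, b * d)) (delta h)) (delta g)))) \<and>
     eps 1 = 1 \<and> (\<forall>g h. eps (g * h) = eps g * eps h) \<and>
     \<comment> \<open>antipode: k-linear, convolution inverse of the identity\<close>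
     (\<forall>a b. S (a + b) = S a + S b) \<and> (\<forall>c a. S (scH c a) = scH c (S a)) \<and>
     (\<forall>h. sum_list (map (\<lambda>(a, b). S a * b) (delta h)) = scH (eps h) 1) \<and>
     (\<forall>h. sum_list (map (\<lambda>(a, b). a * S b) (delta h)) = scH (eps h) 1)"

definition left_module ::
  "('k::field \<Rightarrow> 'h::ring_1 \<Rightarrow> 'h) \<Rightarrow> ('k \<Rightarrow> 'n::ab_group_add \<Rightarrow> 'n) \<Rightarrow> ('h \<Rightarrow> 'n \<Rightarrow> 'n) \<Rightarrow> bool"
  where
  "left_module scH scN act \<longleftrightarrow>
     vector_space scN \<and>
     (\<forall>a b n. act (a + b) n = act a n + act b n) \<and>
     (\<forall>c a n. act (scH c a) n = scN c (act a n)) \<and>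
     (\<forall>h n n'. act h (n + n') = act h n + act h n') \<and>
     (\<forall>h c n. act h (scN c n) = scN c (act h n)) \<and>
     (\<forall>n. act 1 n = n) \<and>
     (\<forall>a b n. act (a * b) n = act a (act b n))"

text \<open>Stated generically for a vector space presented as a type 'v with addition add,
zero z, scalar multiplication sc and an equivalence eqv identifying equal vectors
(eqv is (=) for an honest type; it is tens_rel for formal tensor sums).
pa h is the operator \<pa>(h); the Sweedler sums over \<Delta>(k) are sums over delta k.\<close>

definition vsum :: "('v \<Rightarrow> 'v \<Rightarrow> 'v) \<Rightarrow> 'v \<Rightarrow> 'v list \<Rightarrow> 'v" where
  "vsum add z xs = foldr add xs z"

definition partial_module ::
  "('k::field \<Rightarrow> 'h::ring_1 \<Rightarrow> 'h) \<Rightarrow> ('h \<Rightarrow> ('h \<times> 'h) list) \<Rightarrow> ('h \<Rightarrow> 'h)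
   \<Rightarrow> ('v \<Rightarrow> 'v \<Rightarrow> 'v) \<Rightarrow> 'v \<Rightarrow> ('k \<Rightarrow> 'v \<Rightarrow> 'v) \<Rightarrow> ('v \<Rightarrow> 'v \<Rightarrow> bool)
   \<Rightarrow> ('h \<Rightarrow> 'v \<Rightarrow> 'v) \<Rightarrow> bool"
  where
  "partial_module scH delta S add z sc eqv pa \<longleftrightarrow>
     \<comment> \<open>each \<pa>(h) is a well-defined k-linear endomorphism\<close>
     (\<forall>h x y. eqv x y \<longrightarrow> eqv (pa h x) (pa h y)) \<and>
     (\<forall>h x y. eqv (pa h (add x y)) (add (pa h x) (pa h y))) \<and>
     (\<forall>h c x. eqv (pa h (sc c x)) (sc c (pa h x))) \<and>
     \<comment> \<open>\<pa> : H \<rightarrow> End(V) is k-linear\<close>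
     (\<forall>a b x. eqv (pa (a + b) x) (add (pa a x) (pa b x))) \<and>
     (\<forall>c a x. eqv (pa (scH c a) x) (sc c (pa a x))) \<and>
     \<comment> \<open>\<pa>(1) = id\<close>
     (\<forall>x. eqv (pa 1 x) x) \<and>
     \<comment> \<open>\<pa>(h)\<pa>(k1)\<pa>(S k2) = \<pa>(h k1)\<pa>(S k2)\<close>
     (\<forall>h k x. eqv (vsum add z (map (\<lambda>(a, b). pa h (pa a (pa (S b) x))) (delta k)))
                  (vsum add z (map (\<lambda>(a, b). pa (h * a) (pa (S b) x)) (delta k)))) \<and>
     \<comment> \<open>\<pa>(h1)\<pa>(S h2)\<pa>(k) = \<pa>(h1)\<pa>(S(h2) k)\<close>
     (\<forall>h k x. eqv (vsum add z (map (\<lambda>(a, b). pa a (pa (S b) (pa k x))) (delta h)))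
                  (vsum add z (map (\<lambda>(a, b). pa a (pa (S b * k) x)) (delta h)))) \<and>
     \<comment> \<open>\<pa>(h)\<pa>(S k1)\<pa>(k2) = \<pa>(h S(k1))\<pa>(k2)\<close>
     (\<forall>h k x. eqv (vsum add z (map (\<lambda>(a, b). pa h (pa (S a) (pa b x))) (delta k)))
                  (vsum add z (map (\<lambda>(a, b). pa (h * S a) (pa b x)) (delta k)))) \<and>
     \<comment> \<open>\<pa>(S h1)\<pa>(h2)\<pa>(k) = \<pa>(S h1)\<pa>(h2 k)\<close>
     (\<forall>h k x. eqv (vsum add z (map (\<lambda>(a, b). pa (S a) (pa b (pa k x))) (delta h)))
                  (vsum add z (map (\<lambda>(a, b). pa (S a) (pa (b * k) x)) (delta h))))"

definition tens_act ::
  "('h \<Rightarrow> ('h \<times> 'h) list) \<Rightarrow> ('h \<Rightarrow> 'm \<Rightarrow> 'm) \<Rightarrow> ('h \<Rightarrow> 'n \<Rightarrow> 'n)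
   \<Rightarrow> 'h \<Rightarrow> ('m \<times> 'n) list \<Rightarrow> ('m \<times> 'n) list" where
  "tens_act delta pa act h xs =
     concat (map (\<lambda>(m, n). map (\<lambda>(a, b). (pa a m, act b n)) (delta h)) xs)"

end

theory Submission
  imports Defs
begin


lemma tr_appL: "tens_rel sa sb xs ys \<Longrightarrow> tens_rel sa sb (us @ xs) (us @ ys)"
  using tr_app tr_refl by blast
lemma tr_appR: "tens_rel sa sb xs ys \<Longrightarrow> tens_rel sa sb (xs @ us) (ys @ us)"
  using tr_app tr_refl by blast

lemma tr_cons_snoc: "tens_rel sa sb (x # ys) (ys @ [x])"
proof (induction ys)
  case Nil then show ?case by (simp add: tr_refl)
next
  case (Cons y ys)
  have "tens_rel sa sb ([x, y] @ ys) ([y, x] @ ys)" by (rule tr_appR[OF tr_swap])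
  moreover have "tens_rel sa sb ([y] @ (x # ys)) ([y] @ (ys @ [x]))" by (rule tr_appL[OF Cons])
  ultimately show ?case using tr_trans by fastforce
qed

lemma tr_comm: "tens_rel sa sb (xs @ ys) (ys @ xs)"
proof (induction xs)
  case Nil then show ?case by (simp add: tr_refl)
next
  case (Cons x xs)
  have "tens_rel sa sb ([x] @ (xs @ ys)) ([x] @ (ys @ xs))" by (rule tr_appL[OF Cons])
  moreover have "tens_rel sa sb (x # (ys @ xs)) ((ys @ xs) @ [x])" by (rule tr_cons_snoc)
  moreover have "tens_rel sa sb (ys @ (xs @ [x])) (ys @ (x # xs))"
    by (rule tr_appL[OF tr_sym[OF tr_cons_snoc]])
  ultimately show ?case by (metis tr_trans append_Cons append_Nil append_assoc)
qed

lemma tr_concat_cong: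
  "(\<And>x. x \<in> set xs \<Longrightarrow> tens_rel sa sb (f x) (g x)) \<Longrightarrow>
   tens_rel sa sb (concat (map f xs)) (concat (map g xs))"
  by (induction xs) (auto intro: tr_refl tr_app)

lemma tr_concat_append:
  "tens_rel sa sb (concat (map (\<lambda>x. f x @ g x) xs)) (concat (map f xs) @ concat (map g xs))"
proof (induction xs)
  case Nil then show ?case by (simp add: tr_refl)
next
  case (Cons x xs)
  let ?F = "concat (map f xs)" and ?G = "concat (map g xs)"
  have "tens_rel sa sb ((f x @ g x) @ concat (map (\<lambda>x. f x @ g x) xs)) ((f x @ g x) @ (?F @ ?G))"
    by (rule tr_appL[OF Cons])
  moreover have "tens_rel sa sb (f x @ (g x @ ?F) @ ?G) (f x @ (?F @ g x) @ ?G)"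
    by (rule tr_appL, rule tr_appR, rule tr_comm)
  ultimately show ?case using tr_trans by fastforce
qed

lemma tr_fubini:
  "tens_rel sa sb (concat (map (\<lambda>x. concat (map (\<lambda>y. f x y) ys)) xs))
                  (concat (map (\<lambda>y. concat (map (\<lambda>x. f x y) xs)) ys))"
proof (induction xs)
  case Nil then show ?case by (induction ys) (auto intro: tr_refl)
next
  case (Cons x xs)
  have "tens_rel sa sb (concat (map (f x) ys) @ concat (map (\<lambda>x. concat (map (f x) ys)) xs))
          (concat (map (f x) ys) @ concat (map (\<lambda>y. concat (map (\<lambda>x. f x y) xs)) ys))"
    by (rule tr_appL[OF Cons])
  moreover have "tens_rel sa sb (concat (map (f x) ys) @ concat (map (\<lambda>y. concat (map (\<lambda>x. f x y) xs)) ys))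
      (concat (map (\<lambda>y. f x y @ concat (map (\<lambda>x. f x y) xs)) ys))"
    by (rule tr_sym, rule tr_concat_append)
  ultimately show ?case using tr_trans by fastforce
qed

lemma tr_collect:
  "tens_rel sa sb (concat (map (\<lambda>p. [(f p, n)]) l)) [(foldr (+) (map f l) 0, n)]"
proof (induction l)
  case Nil then show ?case by (simp add: tr_sym tr_zero)
next
  case (Cons p l)
  have "tens_rel sa sb ([(f p, n)] @ concat (map (\<lambda>p. [(f p, n)]) l)) ([(f p, n)] @ [(foldr (+) (map f l) 0, n)])"
    by (rule tr_appL[OF Cons])
  then show ?case using tr_trans tr_sym[OF tr_addL] by fastforce
qed

lemma tr_transfer:
  assumes "tens_rel sa sb u v"
    and "\<And>a a' b. tens_rel sc sd (g (a + a') b) (g a b @ g a' b)"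
    and "\<And>a b b'. tens_rel sc sd (g a (b + b')) (g a b @ g a b')"
    and "\<And>b. tens_rel sc sd (g 0 b) []"
    and "\<And>c a b. tens_rel sc sd (g (sa c a) b) (g a (sb c b))"
  shows "tens_rel sc sd (concat (map (\<lambda>(a, b). g a b) u)) (concat (map (\<lambda>(a, b). g a b) v))"
  using assms(1)
proof (induction rule: tens_rel.induct)
  case (tr_swap x y) then show ?case by (cases x; cases y) (simp add: tr_comm)
qed (auto intro: tr_refl tr_sym tr_trans tr_app assms(2-5))

lemma t3_transfer:
  assumes "tens3_rel sa sb se u v"
    and "\<And>a a' b e. tens_rel sc sd (g (a + a') b e) (g a b e @ g a' b e)"
    and "\<And>a b b' e. tens_rel sc sd (g a (b + b') e) (g a b e @ g a b' e)"
    and "\<And>a b e e'. tens_rel sc sd (g a b (e + e')) (g a b e @ g a b e')"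
    and "\<And>b e. tens_rel sc sd (g 0 b e) []"
    and "\<And>c a b e. tens_rel sc sd (g (sa c a) b e) (g a (sb c b) e)"
    and "\<And>c a b e. tens_rel sc sd (g (sa c a) b e) (g a b (se c e))"
  shows "tens_rel sc sd (concat (map (\<lambda>(a, b, e). g a b e) u)) (concat (map (\<lambda>(a, b, e). g a b e) v))"
  using assms(1)
proof (induction rule: tens3_rel.induct)
  case (t3_swap x y) then show ?case by (cases x; cases y) (simp add: tr_comm)
qed (auto intro: tr_refl tr_sym tr_trans tr_app assms(2-7))



locale pmt =
  fixes scH :: "'k::field \<Rightarrow> 'h::ring_1 \<Rightarrow> 'h"
    and delta :: "'h \<Rightarrow> ('h \<times> 'h) list"
    and eps :: "'h \<Rightarrow> 'k"
    and S :: "'h \<Rightarrow> 'h"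
    and scM :: "'k \<Rightarrow> 'm::ab_group_add \<Rightarrow> 'm"
    and pa :: "'h \<Rightarrow> 'm \<Rightarrow> 'm"
    and scN :: "'k \<Rightarrow> 'n::ab_group_add \<Rightarrow> 'n"
    and act :: "'h \<Rightarrow> 'n \<Rightarrow> 'n"
  assumes hopf: "hopf_algebra scH delta eps S"
    and vsM: "vector_space scM"
    and pm: "partial_module scH delta S (+) 0 scM (=) pa"
    and lm: "left_module scH scN act"
begin

abbreviation R where "R \<equiv> tens_rel scM scN"

lemma R_trans[trans]: "R x y \<Longrightarrow> R y z \<Longrightarrow> R x z" by (rule tr_trans)

lemma vsH: "vector_space scH" using hopf unfolding hopf_algebra_def by blast
lemma vsN: "vector_space scN" using lm unfolding left_module_def by blast

lemma H_scl: "scH c (a * b) = scH c a * b" and H_scr: "scH c (a * b) = a * scH c b"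
  using hopf unfolding hopf_algebra_def by (elim conjE; fast)+
lemma d_add: "tens_rel scH scH (delta (a + b)) (delta a @ delta b)"
  and d_scal: "tens_rel scH scH (delta (scH c a)) (tens_scale scH c (delta a))"
  and coass: "tens3_rel scH scH scH
            (concat (map (\<lambda>(a, b). map (\<lambda>(a1, a2). (a1, a2, b)) (delta a)) (delta h)))
            (concat (map (\<lambda>(a, b). map (\<lambda>(b1, b2). (a, b1, b2)) (delta b)) (delta h)))"
  and counit1: "sum_list (map (\<lambda>(a, b). scH (eps a) b) (delta h)) = h"
  and counit2: "sum_list (map (\<lambda>(a, b). scH (eps b) a) (delta h)) = h"
  and d_one: "tens_rel scH scH (delta 1) [(1, 1)]"
  and d_mul: "tens_rel scH scH (delta (g * h))
        (concat (map (\<lambda>(a, b). map (\<lambda>(c, d). (a * c, b * d)) (delta h)) (delta g)))"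
  and S_add: "S (a + b) = S a + S b" and S_scal: "S (scH c a) = scH c (S a)"
  and anti1: "sum_list (map (\<lambda>(a, b). S a * b) (delta h)) = scH (eps h) 1"
  and anti2: "sum_list (map (\<lambda>(a, b). a * S b) (delta h)) = scH (eps h) 1"
  using hopf unfolding hopf_algebra_def by (elim conjE; fast)+

lemma pa_addR: "pa h (x + y) = pa h x + pa h y"
  and pa_scR: "pa h (scM c x) = scM c (pa h x)"
  and pa_addL: "pa (a + b) x = pa a x + pa b x"
  and pa_scL: "pa (scH c a) x = scM c (pa a x)"
  and pa_one: "pa 1 x = x"
  and pm7: "vsum (+) 0 (map (\<lambda>(a, b). pa h (pa a (pa (S b) x))) (delta k)) =
            vsum (+) 0 (map (\<lambda>(a, b). pa (h * a) (pa (S b) x)) (delta k))"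
  and pm8: "vsum (+) 0 (map (\<lambda>(a, b). pa a (pa (S b) (pa k x))) (delta h)) =
            vsum (+) 0 (map (\<lambda>(a, b). pa a (pa (S b * k) x)) (delta h))"
  and pm9: "vsum (+) 0 (map (\<lambda>(a, b). pa h (pa (S a) (pa b x))) (delta k)) =
            vsum (+) 0 (map (\<lambda>(a, b). pa (h * S a) (pa b x)) (delta k))"
  and pm10: "vsum (+) 0 (map (\<lambda>(a, b). pa (S a) (pa b (pa k x))) (delta h)) =
            vsum (+) 0 (map (\<lambda>(a, b). pa (S a) (pa (b * k) x)) (delta h))"
  using pm unfolding partial_module_def by (elim conjE; fast)+

lemma act_addL: "act (a + b) n = act a n + act b n"
  and act_scL: "act (scH c a) n = scN c (act a n)"
  and act_addR: "act h (n + n') = act h n + act h n'"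
  and act_scR: "act h (scN c n) = scN c (act h n)"
  and act_one: "act 1 n = n"
  and act_mul: "act (a * b) n = act a (act b n)"
  using lm unfolding left_module_def by (elim conjE; fast)+

lemma scM_zero: "scM 0 x = 0" using vsM by (simp add: module.scale_zero_left vector_space_def module_def)
lemma scM_dist: "scM c (x + y) = scM c x + scM c y" using vsM by (simp add: module.scale_right_distrib vector_space_def module_def)
lemma scM_scM: "scM c (scM d x) = scM (c * d) x" using vsM by (simp add: module.scale_scale vector_space_def module_def)
lemma scM_one: "scM 1 x = x" using vsM by (simp add: module.scale_one vector_space_def module_def)
lemma scM_0r: "scM c 0 = 0" using vsM by (simp add: module.scale_zero_right vector_space_def module_def)
lemma scH_zero: "scH 0 x = 0" using vsH by (simp add: module.scale_zero_left vector_space_def module_def)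

lemma ts_cong: "R xs ys \<Longrightarrow> R (tens_scale scM c xs) (tens_scale scM c ys)"
proof (induction rule: tens_rel.induct)
  case (tr_scal c' a b)
  have "scM c (scM c' a) = scM c' (scM c a)" by (simp add: scM_scM mult.commute)
  then show ?case by (simp add: tens_scale_def) (rule tr_scal)
qed (auto simp: tens_scale_def scM_dist scM_0r intro: tens_rel.intros)

lemma ts_append[simp]: "tens_scale sc c (xs @ ys) = tens_scale sc c xs @ tens_scale sc c ys"
  by (simp add: tens_scale_def)
lemma ts_concat: "tens_scale sc c (concat L) = concat (map (tens_scale sc c) L)"
  by (induction L) (simp_all add: tens_scale_def)
lemma ts_ts: "tens_scale scM c (tens_scale scM d xs) = tens_scale scM (c * d) xs"
  by (simp add: tens_scale_def scM_scM split_def)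
lemma ts_one: "tens_scale scM 1 xs = xs"
  by (induction xs) (auto simp: tens_scale_def scM_one)
lemma ts_zero: "R (tens_scale scM 0 xs) []"
proof (induction xs)
  case Nil then show ?case by (simp add: tens_scale_def tr_refl)
next
  case (Cons x xs)
  have "R ([(0, snd x)] @ tens_scale scM 0 xs) ([] @ [])"
    by (rule tr_app[OF tr_zero Cons])
  then show ?case by (cases x) (simp add: tens_scale_def scM_zero)
qed

definition linH where
  "linH f \<longleftrightarrow> (\<forall>a b. R (f (a + b)) (f a @ f b)) \<and> (\<forall>c a. R (f (scH c a)) (tens_scale scM c (f a)))"

lemma linH_add: "linH f \<Longrightarrow> R (f (a + b)) (f a @ f b)" by (simp add: linH_def)
lemma linH_sc: "linH f \<Longrightarrow> R (f (scH c a)) (tens_scale scM c (f a))" by (simp add: linH_def)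
lemma linH_zero: "linH f \<Longrightarrow> R (f 0) []"
  using linH_sc[of f 0 0] ts_zero[of "f 0"] tr_trans by (fastforce simp: scH_zero)
lemma linH_sum: "linH f \<Longrightarrow> R (f (sum_list xs)) (concat (map f xs))"
proof (induction xs)
  case Nil then show ?case by (simp add: linH_zero)
next
  case (Cons x xs)
  then show ?case using linH_add[OF Cons(2)] tr_appL tr_trans by fastforce
qed

definition linHM where
  "linHM f \<longleftrightarrow> (\<forall>a b. f (a + b) = f a + f b) \<and> (\<forall>c a. f (scH c a) = scM c (f a))"
definition linHN where
  "linHN f \<longleftrightarrow> (\<forall>a b. f (a + b) = f a + f b) \<and> (\<forall>c a. f (scH c a) = scN c (f a))"
definition linHH where
  "linHH f \<longleftrightarrow> (\<forall>a b. f (a + b) = f a + f b) \<and> (\<forall>c a. f (scH c a) = scH c (f a))"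

lemma kerM: "linHM f \<Longrightarrow> linH (\<lambda>x. [(f x, y)])"
  unfolding linH_def linHM_def by (auto simp: tens_scale_def intro: tr_addL tr_refl)
lemma kerN: "linHN g \<Longrightarrow> linH (\<lambda>x. [(y, g x)])"
  unfolding linH_def linHN_def by (auto simp: tens_scale_def intro: tr_addR tr_sym[OF tr_scal])

lemma linHH_id: "linHH (\<lambda>x. x)" unfolding linHH_def by simp
lemma linHH_mulL: "linHH p \<Longrightarrow> linHH (\<lambda>x. a * p x)"
  unfolding linHH_def by (simp add: distrib_left H_scr)
lemma linHH_mulR: "linHH p \<Longrightarrow> linHH (\<lambda>x. p x * a)"
  unfolding linHH_def by (simp add: distrib_right H_scl)
lemma linHH_S: "linHH p \<Longrightarrow> linHH (\<lambda>x. S (p x))"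
  unfolding linHH_def by (simp add: S_add S_scal)
lemma linHM_pa1: "linHH p \<Longrightarrow> linHM (\<lambda>x. pa (p x) y)"
  unfolding linHH_def linHM_def by (simp add: pa_addL pa_scL)
lemma linHM_pa2: "linHM f \<Longrightarrow> linHM (\<lambda>x. pa a (f x))"
  unfolding linHM_def by (simp add: pa_addR pa_scR)
lemma linHN_act1: "linHH p \<Longrightarrow> linHN (\<lambda>x. act (p x) y)"
  unfolding linHH_def linHN_def by (simp add: act_addL act_scL)
lemma linHN_act2: "linHN f \<Longrightarrow> linHN (\<lambda>x. act a (f x))"
  unfolding linHN_def by (simp add: act_addR act_scR)

lemmas lin_intros = kerM kerN linHH_id linHH_mulL linHH_mulR linHH_S linHM_pa1 linHM_pa2
  linHN_act1 linHN_act2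

definition D where "D h g = concat (map (\<lambda>(a, b). g a b) (delta h))"

lemma D_append: "R (D h (\<lambda>a b. f a b @ g a b)) (D h f @ D h g)"
  unfolding D_def using tr_concat_append[of scM scN "\<lambda>x. f (fst x) (snd x)" "\<lambda>x. g (fst x) (snd x)"]
  by (simp add: split_def)

lemma D_cong: "(\<And>a b. R (f a b) (g a b)) \<Longrightarrow> R (D h f) (D h g)"
  unfolding D_def by (rule tr_concat_cong) auto

lemma D_scale: "D h (\<lambda>a b. tens_scale scM c (f a b)) = tens_scale scM c (D h f)"
  unfolding D_def by (simp add: ts_concat split_def comp_def)

lemma D_trans_lemma:
  assumes "\<And>a. linH (g a)" "\<And>b. linH (\<lambda>a. g a b)" "tens_rel scH scH u v"
  shows "R (concat (map (\<lambda>(a, b). g a b) u)) (concat (map (\<lambda>(a, b). g a b) v))"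
proof (rule tr_transfer[OF assms(3)])
  show "R (g (a + a') b) (g a b @ g a' b)" for a a' b using linH_add[OF assms(2)] .
  show "R (g a (b + b')) (g a b @ g a b')" for a b b' using linH_add[OF assms(1)] .
  show "R (g 0 b) []" for b using linH_zero[OF assms(2)] .
  show "R (g (scH c a) b) (g a (scH c b))" for c a b
    using linH_sc[OF assms(2)] linH_sc[OF assms(1)] tr_trans tr_sym by metis
qed

lemma D_add: "(\<And>a. linH (g a)) \<Longrightarrow> (\<And>b. linH (\<lambda>a. g a b)) \<Longrightarrow> R (D (x + y) g) (D x g @ D y g)"
  unfolding D_def using D_trans_lemma[OF _ _ d_add] by simp

lemma D_sc: "(\<And>a. linH (g a)) \<Longrightarrow> (\<And>b. linH (\<lambda>a. g a b)) \<Longrightarrow>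
  R (D (scH c x) g) (tens_scale scM c (D x g))"
proof -
  assume a1: "\<And>a. linH (g a)" and a2: "\<And>b. linH (\<lambda>a. g a b)"
  have "R (D (scH c x) g) (concat (map (\<lambda>(a, b). g a b) (tens_scale scH c (delta x))))"
    unfolding D_def by (rule D_trans_lemma[OF a1 a2 d_scal])
  also have "concat (map (\<lambda>(a, b). g a b) (tens_scale scH c (delta x))) =
     D x (\<lambda>a b. g (scH c a) b)" unfolding D_def tens_scale_def by (simp add: split_def comp_def)
  also have "R (D x (\<lambda>a b. g (scH c a) b)) (D x (\<lambda>a b. tens_scale scM c (g a b)))"
    by (rule D_cong, rule linH_sc[OF a2])
  finally show ?thesis by (simp add: D_scale)
qed

lemma D_lin: "linHH p \<Longrightarrow> (\<And>a. linH (g a)) \<Longrightarrow> (\<And>b. linH (\<lambda>a. g a b)) \<Longrightarrow>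
  linH (\<lambda>x. D (p x) g)"
  unfolding linH_def[of "\<lambda>x. D (p x) g"] linHH_def
  using D_add[of g] D_sc[of g] by auto

lemma D_par: "(\<And>a b. linH (\<lambda>r. g r a b)) \<Longrightarrow> linH (\<lambda>r. D h (g r))"
proof -
  assume a: "\<And>a b. linH (\<lambda>r. g r a b)"
  have "R (D h (g (x + y))) (D h (g x) @ D h (g y))" for x y
  proof -
    have "R (D h (g (x + y))) (D h (\<lambda>a b. g x a b @ g y a b))"
      by (rule D_cong, rule linH_add[OF a])
    also have "R ... (D h (g x) @ D h (g y))" by (rule D_append)
    finally show ?thesis .
  qed
  moreover have "R (D h (g (scH c x))) (tens_scale scM c (D h (g x)))" for c x
  proof -
    have "R (D h (g (scH c x))) (D h (\<lambda>a b. tens_scale scM c (g x a b)))"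
      by (rule D_cong, rule linH_sc[OF a])
    then show ?thesis by (simp add: D_scale)
  qed
  ultimately show ?thesis unfolding linH_def by blast
qed

lemma concat_concat': "concat (concat xss) = concat (map concat xss)"
  by (induction xss) auto

lemma D_coassoc:
  assumes "\<And>b e. linH (\<lambda>a. g a b e)" "\<And>a e. linH (\<lambda>b. g a b e)" "\<And>a b. linH (\<lambda>e. g a b e)"
  shows "R (D h (\<lambda>a b. D a (\<lambda>a1 a2. g a1 a2 b))) (D h (\<lambda>a b. D b (\<lambda>b1 b2. g a b1 b2)))"
proof -
  have "R (concat (map (\<lambda>(a, b, e). g a b e) (concat (map (\<lambda>(a, b). map (\<lambda>(a1, a2). (a1, a2, b)) (delta a)) (delta h)))))
          (concat (map (\<lambda>(a, b, e). g a b e) (concat (map (\<lambda>(a, b). map (\<lambda>(b1, b2). (a, b1, b2)) (delta b)) (delta h)))))"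
  proof (rule t3_transfer[OF coass])
    show "R (g (a + a') b e) (g a b e @ g a' b e)" for a a' b e using linH_add[OF assms(1)] .
    show "R (g a (b + b') e) (g a b e @ g a b' e)" for a b b' e using linH_add[OF assms(2)] .
    show "R (g a b (e + e')) (g a b e @ g a b e')" for a b e e' using linH_add[OF assms(3)] .
    show "R (g 0 b e) []" for b e using linH_zero[OF assms(1)] .
    show "R (g (scH c a) b e) (g a (scH c b) e)" for c a b e
      using linH_sc[OF assms(1)] linH_sc[OF assms(2)] tr_trans tr_sym by metis
    show "R (g (scH c a) b e) (g a b (scH c e))" for c a b e
      using linH_sc[OF assms(1)] linH_sc[OF assms(3)] tr_trans tr_sym by metis
  qed
  then show ?thesis unfolding D_def by (simp add: map_concat split_def comp_def concat_concat')
qed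

lemma D_mul:
  assumes "\<And>a. linH (f a)" "\<And>b. linH (\<lambda>a. f a b)"
  shows "R (D (g * h) f) (D g (\<lambda>a b. D h (\<lambda>c d. f (a * c) (b * d))))"
proof -
  have "R (D (g * h) f) (concat (map (\<lambda>(a, b). f a b)
        (concat (map (\<lambda>(a, b). map (\<lambda>(c, d). (a * c, b * d)) (delta h)) (delta g)))))"
    unfolding D_def by (rule D_trans_lemma[OF assms d_mul])
  then show ?thesis unfolding D_def by (simp add: map_concat split_def comp_def concat_concat')
qed

lemma D_one:
  assumes "\<And>a. linH (f a)" "\<And>b. linH (\<lambda>a. f a b)"
  shows "R (D 1 f) (f 1 1)"
  using D_trans_lemma[OF assms d_one] unfolding D_def by simp

lemma D_counit1: "linH f \<Longrightarrow> R (D h (\<lambda>a b. f (scH (eps a) b))) (f h)"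
  using linH_sum[of f "map (\<lambda>(a, b). scH (eps a) b) (delta h)"] unfolding counit1 D_def
  by (simp add: split_def comp_def tr_sym)
lemma D_counit2: "linH f \<Longrightarrow> R (D h (\<lambda>a b. f (scH (eps b) a))) (f h)"
  using linH_sum[of f "map (\<lambda>(a, b). scH (eps b) a) (delta h)"] unfolding counit2 D_def
  by (simp add: split_def comp_def tr_sym)
lemma D_anti1: "linH f \<Longrightarrow> R (D h (\<lambda>a b. f (S a * b))) (f (scH (eps h) 1))"
  using linH_sum[of f "map (\<lambda>(a, b). S a * b) (delta h)"] unfolding anti1 D_def
  by (simp add: split_def comp_def tr_sym)
lemma D_anti2: "linH f \<Longrightarrow> R (D h (\<lambda>a b. f (a * S b))) (f (scH (eps h) 1))"
  using linH_sum[of f "map (\<lambda>(a, b). a * S b) (delta h)"] unfolding anti2 D_def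
  by (simp add: split_def comp_def tr_sym)

lemma linH_comp: "linH f \<Longrightarrow> linHH p \<Longrightarrow> linH (\<lambda>x. f (p x))"
  unfolding linH_def linHH_def by simp

lemma linHH_mulRS: "linHH (\<lambda>x. x * S c)" "linHH (\<lambda>x. c * S x)" "linHH (\<lambda>x. c * x)" "linHH (\<lambda>x. x * c)"
  by (rule linHH_mulR linHH_mulL linHH_S linHH_id)+

lemma collapse:
  assumes G1: "\<And>b e. linH (\<lambda>a. G a b e)" and G2: "\<And>a e. linH (\<lambda>b. G a b e)"
    and G3: "\<And>a b. linH (\<lambda>e. G a b e)"
  shows "R (D k (\<lambda>a b. D a (\<lambda>a1 a2. D b (\<lambda>b1 b2. G a1 (a2 * S b1) b2)))) (D k (\<lambda>a b. G a 1 b))"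
proof -
  have L2: "linH (\<lambda>r. G a (r * S c) d)" for a c d
    by (rule linH_comp[OF G2 linHH_mulRS(1)])
  have L2': "linH (\<lambda>r. G a (c * S r) d)" for a c d
    by (rule linH_comp[OF G2 linHH_mulRS(2)])
  have "R (D k (\<lambda>a b. D a (\<lambda>a1 a2. D b (\<lambda>b1 b2. G a1 (a2 * S b1) b2))))
          (D k (\<lambda>a b. D b (\<lambda>b1 b2. D b2 (\<lambda>c d. G a (b1 * S c) d))))"
  proof (rule D_coassoc[where g="\<lambda>a1 a2 b. D b (\<lambda>b1 b2. G a1 (a2 * S b1) b2)"])
    show "linH (\<lambda>a. D b (\<lambda>b1 b2. G a (e * S b1) b2))" for b e by (rule D_par, rule G1)
    show "linH (\<lambda>x. D b (\<lambda>b1 b2. G a (x * S b1) b2))" for a b by (rule D_par, rule L2)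
    show "linH (\<lambda>e. D e (\<lambda>b1 b2. G a (b * S b1) b2))" for a b
      by (rule D_lin[OF linHH_id], rule G3, rule L2')
  qed
  also have "R ... (D k (\<lambda>a b. D b (\<lambda>x d. D x (\<lambda>b1 c. G a (b1 * S c) d))))"
  proof (rule D_cong, rule tr_sym, rule D_coassoc[where g="\<lambda>b1 c d. G _ (b1 * S c) d"])
    show "linH (\<lambda>x. G a (x * S b) e)" for a b e by (rule L2)
    show "linH (\<lambda>x. G a (b * S x) e)" for a b e by (rule L2')
    show "linH (\<lambda>x. G a (b * S e) x)" for a b e by (rule G3)
  qed
  also have "R ... (D k (\<lambda>a b. D b (\<lambda>x d. G a 1 (scH (eps x) d))))"
  proof (rule D_cong, rule D_cong)
    fix a b x d
    have "R (D x (\<lambda>b1 c. G a (b1 * S c) d)) (G a (scH (eps x) 1) d)"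
      by (rule D_anti2, rule G2)
    also have "R ... (tens_scale scM (eps x) (G a 1 d))" by (rule linH_sc, rule G2)
    also have "R ... (G a 1 (scH (eps x) d))" by (rule tr_sym, rule linH_sc, rule G3)
    finally show "R (D x (\<lambda>b1 c. G a (b1 * S c) d)) (G a 1 (scH (eps x) d))" .
  qed
  also have "R ... (D k (\<lambda>a b. G a 1 b))"
    by (rule D_cong, rule D_counit1, rule G3)
  finally show ?thesis .
qed

lemma D_swap: "R (D x (\<lambda>a b. D y (f a b))) (D y (\<lambda>c d. D x (\<lambda>a b. f a b c d)))"
  unfolding D_def using tr_fubini[of scM scN "\<lambda>p q. f (fst p) (snd p) (fst q) (snd q)" "delta y" "delta x"]
  by (simp add: split_def)

lemma DS:
  assumes F1: "\<And>b. linH (\<lambda>a. F a b)" and F2: "\<And>a. linH (F a)"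
  shows "R (D (S h) F) (D h (\<lambda>a b. F (S b) (S a)))"
proof -
  define G where "G a u v = D (S a) (\<lambda>c1 c2. F (c1 * u) (c2 * v))" for a u v
  have G1: "linH (\<lambda>u. G a u v)" for a v unfolding G_def
    by (rule D_par, rule linH_comp[OF F1 linHH_mulRS(3)])
  have G2: "linH (\<lambda>v. G a u v)" for a u unfolding G_def
    by (rule D_par, rule linH_comp[OF F2 linHH_mulRS(3)])
  have FS: "linH (\<lambda>x. D (S x) F)" by (rule D_lin[OF linHH_S[OF linHH_id] F2 F1])
  have "R (D (S h) F) (D h (\<lambda>a b. D (S (scH (eps b) a)) F))"
    by (rule tr_sym, rule D_counit2[OF FS])
  also have "R ... (D h (\<lambda>a b. tens_scale scM (eps b) (D (S a) F)))"
    by (rule D_cong, rule linH_sc[OF FS])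
  also have "R ... (D h (\<lambda>a b. D b (\<lambda>x y. D x (\<lambda>p q. D y (\<lambda>r s. G a (p * S s) (q * S r))))))"
  proof (rule D_cong)
    fix a b
    have "R (D b (\<lambda>x y. D x (\<lambda>p q. D y (\<lambda>r s. (\<lambda>a1 v b2. G a (a1 * S b2) v) p (q * S r) s))))
             (D b (\<lambda>x y. (\<lambda>a1 v b2. G a (a1 * S b2) v) x 1 y))"
    proof (rule collapse)
      show "linH (\<lambda>x. G a (x * S e) b)" for b e by (rule linH_comp[OF G1 linHH_mulRS(1)])
      show "linH (\<lambda>x. G a (b * S e) x)" for b e by (rule G2)
      show "linH (\<lambda>x. G a (b' * S x) e)" for b' e by (rule linH_comp[OF G1 linHH_mulRS(2)])
    qed
    also have "R (D b (\<lambda>x y. (\<lambda>a1 v b2. G a (a1 * S b2) v) x 1 y)) (G a (scH (eps b) 1) 1)"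
      using D_anti2[OF G1[of a 1], of b] by simp
    also have "R ... (tens_scale scM (eps b) (G a 1 1))" by (rule linH_sc[OF G1])
    finally have "R (D b (\<lambda>x y. D x (\<lambda>p q. D y (\<lambda>r s. G a (p * S s) (q * S r)))))
                    (tens_scale scM (eps b) (D (S a) F))" by (simp add: G_def)
    then show "R (tens_scale scM (eps b) (D (S a) F))
                 (D b (\<lambda>x y. D x (\<lambda>p q. D y (\<lambda>r s. G a (p * S s) (q * S r)))))" by (rule tr_sym)
  qed
  also have "R ... (D h (\<lambda>a b. D b (\<lambda>x y. D y (\<lambda>r s. D (S a * x) (\<lambda>d1 d2. F (d1 * S s) (d2 * S r))))))"
  proof (rule D_cong, rule D_cong)
    fix a b x y
    have "R (D x (\<lambda>p q. D y (\<lambda>r s. G a (p * S s) (q * S r))))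
            (D y (\<lambda>r s. D x (\<lambda>p q. G a (p * S s) (q * S r))))" by (rule D_swap)
    also have "R ... (D y (\<lambda>r s. D (S a * x) (\<lambda>d1 d2. F (d1 * S s) (d2 * S r))))"
    proof (rule D_cong)
      fix r s
      have "R (D x (\<lambda>p q. G a (p * S s) (q * S r)))
              (D (S a) (\<lambda>c1 c2. D x (\<lambda>p q. F (c1 * (p * S s)) (c2 * (q * S r)))))"
        unfolding G_def by (rule D_swap)
      also have "D (S a) (\<lambda>c1 c2. D x (\<lambda>p q. F (c1 * (p * S s)) (c2 * (q * S r)))) =
                 D (S a) (\<lambda>c1 c2. D x (\<lambda>p q. (\<lambda>u v. F (u * S s) (v * S r)) (c1 * p) (c2 * q)))"
        by (simp add: mult.assoc)
      also have "R ... (D (S a * x) (\<lambda>u v. F (u * S s) (v * S r)))"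
        by (rule tr_sym, rule D_mul, rule linH_comp[OF F2 linHH_mulRS(4)], rule linH_comp[OF F1 linHH_mulRS(4)])
      finally show "R (D x (\<lambda>p q. G a (p * S s) (q * S r))) (D (S a * x) (\<lambda>d1 d2. F (d1 * S s) (d2 * S r)))" .
    qed
    finally show "R (D x (\<lambda>p q. D y (\<lambda>r s. G a (p * S s) (q * S r))))
         (D y (\<lambda>r s. D (S a * x) (\<lambda>d1 d2. F (d1 * S s) (d2 * S r))))" .
  qed
  also have "R ... (D h (\<lambda>z y. D z (\<lambda>a x. D y (\<lambda>r s. D (S a * x) (\<lambda>d1 d2. F (d1 * S s) (d2 * S r))))))"
  proof (rule tr_sym, rule D_coassoc[where g="\<lambda>a x y. D y (\<lambda>r s. D (S a * x) (\<lambda>d1 d2. F (d1 * S s) (d2 * S r)))"])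
    show "linH (\<lambda>a. D e (\<lambda>r s. D (S a * b) (\<lambda>d1 d2. F (d1 * S s) (d2 * S r))))" for b e
      by (rule D_par, rule D_lin[OF linHH_mulR[OF linHH_S[OF linHH_id]]],
          rule linH_comp[OF F2 linHH_mulRS(4)], rule linH_comp[OF F1 linHH_mulRS(4)])
    show "linH (\<lambda>b. D e (\<lambda>r s. D (S a * b) (\<lambda>d1 d2. F (d1 * S s) (d2 * S r))))" for a e
      by (rule D_par, rule D_lin[OF linHH_mulRS(3)],
          rule linH_comp[OF F2 linHH_mulRS(4)], rule linH_comp[OF F1 linHH_mulRS(4)])
    show "linH (\<lambda>e. D e (\<lambda>r s. D (S a * b) (\<lambda>d1 d2. F (d1 * S s) (d2 * S r))))" for a b
      by (rule D_lin[OF linHH_id], rule D_par, rule linH_comp[OF F1 linHH_mulRS(2)],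
          rule D_par, rule linH_comp[OF F2 linHH_mulRS(2)])
  qed
  also have "R ... (D h (\<lambda>z y. tens_scale scM (eps z) (D y (\<lambda>r s. F (S s) (S r)))))"
  proof (rule D_cong)
    fix z y
    have "R (D z (\<lambda>a x. D y (\<lambda>r s. D (S a * x) (\<lambda>d1 d2. F (d1 * S s) (d2 * S r)))))
            (D y (\<lambda>r s. D z (\<lambda>a x. D (S a * x) (\<lambda>d1 d2. F (d1 * S s) (d2 * S r)))))" by (rule D_swap)
    also have "R ... (D y (\<lambda>r s. tens_scale scM (eps z) (F (S s) (S r))))"
    proof (rule D_cong)
      fix r s
      have L: "linH (\<lambda>t. D t (\<lambda>d1 d2. F (d1 * S s) (d2 * S r)))"
        by (rule D_lin[OF linHH_id], rule linH_comp[OF F2 linHH_mulRS(4)], rule linH_comp[OF F1 linHH_mulRS(4)])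
      have "R (D z (\<lambda>a x. D (S a * x) (\<lambda>d1 d2. F (d1 * S s) (d2 * S r))))
              (D (scH (eps z) 1) (\<lambda>d1 d2. F (d1 * S s) (d2 * S r)))"
        by (rule D_anti1[OF L])
      also have "R ... (tens_scale scM (eps z) (D 1 (\<lambda>d1 d2. F (d1 * S s) (d2 * S r))))"
        by (rule linH_sc[OF L])
      also have "R ... (tens_scale scM (eps z) (F (1 * S s) (1 * S r)))"
        by (rule ts_cong, rule D_one, rule linH_comp[OF F2 linHH_mulRS(4)], rule linH_comp[OF F1 linHH_mulRS(4)])
      finally show "R (D z (\<lambda>a x. D (S a * x) (\<lambda>d1 d2. F (d1 * S s) (d2 * S r))))
                      (tens_scale scM (eps z) (F (S s) (S r)))" by simp
    qed
    finally show "R (D z (\<lambda>a x. D y (\<lambda>r s. D (S a * x) (\<lambda>d1 d2. F (d1 * S s) (d2 * S r)))))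
         (tens_scale scM (eps z) (D y (\<lambda>r s. F (S s) (S r))))" by (simp add: D_scale)
  qed
  also have "R ... (D h (\<lambda>z y. D (scH (eps z) y) (\<lambda>r s. F (S s) (S r))))"
    by (rule D_cong, rule tr_sym, rule linH_sc, rule D_lin[OF linHH_id],
        rule linH_comp[OF F1 linHH_S[OF linHH_id]], rule linH_comp[OF F2 linHH_S[OF linHH_id]])
  also have "R ... (D h (\<lambda>r s. F (S s) (S r)))"
    by (rule D_counit1, rule D_lin[OF linHH_id],
        rule linH_comp[OF F1 linHH_S[OF linHH_id]], rule linH_comp[OF F2 linHH_S[OF linHH_id]])
  finally show ?thesis .
qed

lemmas lsimps = linHM_def linHN_def linHH_def act_addL act_scL act_addR act_scR pa_addL pa_scL pa_addR pa_scR
  distrib_left distrib_right H_scl[symmetric] H_scr[symmetric] S_add S_scal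

lemmas LI = D_par D_lin kerM kerN linHM_pa1 linHM_pa2 linHN_act1 linHN_act2 linHH_id linHH_mulL linHH_mulR linHH_S

abbreviation T where "T \<equiv> tens_act delta pa act"

lemma T_single: "T h [(m, n)] = D h (\<lambda>a b. [(pa a m, act b n)])"
  by (simp add: tens_act_def D_def split_def)
lemma T_append: "T h (xs @ ys) = T h xs @ T h ys"
  by (simp add: tens_act_def)
lemma T_concat: "T h (concat L) = concat (map (T h) L)"
  by (induction L) (simp_all add: T_append tens_act_def)
lemma T_D: "T h (D x g) = D x (\<lambda>a b. T h (g a b))"
  unfolding D_def by (simp add: T_concat split_def comp_def)
lemma T_list: "T h xs = concat (map (\<lambda>(m, n). T h [(m, n)]) xs)"
  by (simp add: tens_act_def)

lemma D_collect: "R (D k (\<lambda>a b. [(X a b, n')])) [(vsum (+) 0 (map (\<lambda>(a, b). X a b) (delta k)), n')]"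
  unfolding D_def vsum_def using tr_collect[of scM scN "\<lambda>(a, b). X a b" n' "delta k"]
  by (simp add: split_def)

lemma ax7_single: "R (D k (\<lambda>a b. T h (T a (T (S b) [(m, n)]))))
                     (D k (\<lambda>a b. T (h * a) (T (S b) [(m, n)])))"
proof -
  have "R (D k (\<lambda>a b. T h (T a (T (S b) [(m, n)]))))
          (D k (\<lambda>a b. D b (\<lambda>b1 b2. D a (\<lambda>a1 a2. D h (\<lambda>h1 h2.
              [(pa h1 (pa a1 (pa (S b2) m)), act h2 (act a2 (act (S b1) n)))])))))"
    unfolding T_single T_D
    by (rule D_cong, rule DS; (intro D_par D_lin kerM kerN)?; simp add: lsimps)
  also have "R ... (D k (\<lambda>a b. D a (\<lambda>a1 a2. D b (\<lambda>b1 b2. D h (\<lambda>h1 h2.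
              [(pa h1 (pa a1 (pa (S b2) m)), act h2 (act (a2 * S b1) n))])))))"
    by (rule D_cong, simp only: act_mul, rule D_swap)
  also have "R ... (D k (\<lambda>a b. D h (\<lambda>h1 h2. [(pa h1 (pa a (pa (S b) m)), act h2 (act 1 n))])))"
    by (rule collapse[where G="\<lambda>u v w. D h (\<lambda>h1 h2. [(pa h1 (pa u (pa (S w) m)), act h2 (act v n))])"];
        (intro D_par D_lin kerM kerN)?; simp add: lsimps)
  also have "R ... (D h (\<lambda>h1 h2. D k (\<lambda>a b. [(pa h1 (pa a (pa (S b) m)), act h2 n)])))"
    by (simp only: act_one) (rule D_swap)
  also have "R ... (D h (\<lambda>h1 h2. D k (\<lambda>a b. [(pa (h1 * a) (pa (S b) m), act h2 n)])))"
  proof (rule D_cong)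
    fix h1 h2
    show "R (D k (\<lambda>a b. [(pa h1 (pa a (pa (S b) m)), act h2 n)])) (D k (\<lambda>a b. [(pa (h1 * a) (pa (S b) m), act h2 n)]))"
      by (rule tr_trans[OF D_collect], simp only: pm7, rule tr_sym[OF D_collect])
  qed
  also have "R ... (D k (\<lambda>a b. D h (\<lambda>h1 h2. [(pa (h1 * a) (pa (S b) m), act h2 (act 1 n))])))"
    by (simp only: act_one) (rule D_swap)
  also have "R ... (D k (\<lambda>a b. D a (\<lambda>a1 a2. D b (\<lambda>b1 b2. D h (\<lambda>h1 h2.
              [(pa (h1 * a1) (pa (S b2) m), act h2 (act (a2 * S b1) n))])))))"
    by (rule tr_sym, rule collapse[where G="\<lambda>u v w. D h (\<lambda>h1 h2. [(pa (h1 * u) (pa (S w) m), act h2 (act v n))])"];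
        (intro D_par D_lin kerM kerN)?; simp add: lsimps)
  also have "R ... (D k (\<lambda>a b. D b (\<lambda>b1 b2. D a (\<lambda>a1 a2. D h (\<lambda>h1 h2.
              [(pa (h1 * a1) (pa (S b2) m), act (h2 * a2) (act (S b1) n))])))))"
    by (rule D_cong, simp only: act_mul mult.assoc, rule D_swap)
  also have "R ... (D k (\<lambda>a b. D b (\<lambda>b1 b2. D h (\<lambda>h1 h2. D a (\<lambda>a1 a2.
              [(pa (h1 * a1) (pa (S b2) m), act (h2 * a2) (act (S b1) n))])))))"
    by (rule D_cong, rule D_cong, rule D_swap)
  also have "R ... (D k (\<lambda>a b. D (S b) (\<lambda>c1 c2. D h (\<lambda>h1 h2. D a (\<lambda>a1 a2.
              [(pa (h1 * a1) (pa c1 m), act (h2 * a2) (act c2 n))])))))"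
    by (rule D_cong, rule tr_sym, rule DS; (intro D_par D_lin kerM kerN)?; simp add: lsimps)
  also have "R ... (D k (\<lambda>a b. T (h * a) (T (S b) [(m, n)])))"
    unfolding T_single T_D
    by (rule D_cong, rule D_cong, rule tr_sym, rule D_mul; (intro D_par D_lin kerM kerN)?; simp add: lsimps)
  finally show ?thesis .
qed

lemma R4:
  assumes Q1: "\<And>a2 b1 b2. linH (\<lambda>x. Q x a2 b1 b2)" and Q2: "\<And>a1 b1 b2. linH (\<lambda>x. Q a1 x b1 b2)"
    and Q3: "\<And>a1 a2 b2. linH (\<lambda>x. Q a1 a2 x b2)" and Q4: "\<And>a1 a2 b1. linH (\<lambda>x. Q a1 a2 b1 x)"
  shows "R (D k (\<lambda>a b. D b (\<lambda>b1 b2. D a (\<lambda>a1 a2. Q a1 a2 b1 b2))))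
           (D k (\<lambda>y b2. D y (\<lambda>a1 z. D z (\<lambda>a2 b1. Q a1 a2 b1 b2))))"
proof -
  have "R (D k (\<lambda>a b. D b (\<lambda>b1 b2. D a (\<lambda>a1 a2. Q a1 a2 b1 b2))))
          (D k (\<lambda>y b2. D y (\<lambda>a b1. D a (\<lambda>a1 a2. Q a1 a2 b1 b2))))"
  proof (rule tr_sym, rule D_coassoc[where g="\<lambda>a b1 b2. D a (\<lambda>a1 a2. Q a1 a2 b1 b2)"])
    show "linH (\<lambda>a. D a (\<lambda>a1 a2. Q a1 a2 b e))" for b e by (rule D_lin[OF linHH_id Q2 Q1])
    show "linH (\<lambda>x. D a (\<lambda>a1 a2. Q a1 a2 x e))" for a e by (rule D_par, rule Q3)
    show "linH (\<lambda>x. D a (\<lambda>a1 a2. Q a1 a2 b x))" for a b by (rule D_par, rule Q4)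
  qed
  also have "R ... (D k (\<lambda>y b2. D y (\<lambda>a1 z. D z (\<lambda>a2 b1. Q a1 a2 b1 b2))))"
    by (rule D_cong, rule D_coassoc[where g="\<lambda>a1 a2 b1. Q a1 a2 b1 _"], rule Q1, rule Q2, rule Q3)
  finally show ?thesis .
qed

lemma ax8_single: "R (D h (\<lambda>a b. T a (T (S b) (T k [(m, n)]))))
                     (D h (\<lambda>a b. T a (T (S b * k) [(m, n)])))"
proof -
  have "R (D h (\<lambda>a b. T a (T (S b) (T k [(m, n)]))))
     (D h (\<lambda>a b. D k (\<lambda>k1 k2. D b (\<lambda>b1 b2. D a (\<lambda>a1 a2. [(pa a1 (pa (S b2) (pa k1 m)), act a2 (act (S b1) (act k2 n)))])))))"
    unfolding T_single T_D
    by (rule D_cong, rule D_cong, rule DS; (intro D_par D_lin kerM kerN)?; simp add: lsimps)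
  also have "R ... (D k (\<lambda>k1 k2. D h (\<lambda>a b. D b (\<lambda>b1 b2. D a (\<lambda>a1 a2. [(pa a1 (pa (S b2) (pa k1 m)), act a2 (act (S b1) (act k2 n)))])))))"
    by (rule D_swap)
  also have "R ... (D k (\<lambda>k1 k2. D h (\<lambda>a b. D a (\<lambda>a1 a2. D b (\<lambda>b1 b2. [(pa a1 (pa (S b2) (pa k1 m)), act (a2 * S b1) (act k2 n))])))))"
    by (rule D_cong, rule D_cong, simp only: act_mul, rule D_swap)
  also have "R ... (D k (\<lambda>k1 k2. D h (\<lambda>a b. [(pa a (pa (S b) (pa k1 m)), act 1 (act k2 n))])))"
    by (rule D_cong, rule collapse[where G="\<lambda>u v w. [(pa u (pa (S w) (pa _ m)), act v (act _ n))]"]; (intro D_par D_lin kerM kerN)?; simp add: lsimps)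
  also have "R ... (D k (\<lambda>k1 k2. D h (\<lambda>a b. [(pa a (pa (S b * k1) m), act 1 (act k2 n))])))"
    by (rule D_cong, rule tr_trans[OF D_collect], simp only: pm8, rule tr_sym[OF D_collect])
  also have "R ... (D k (\<lambda>k1 k2. D h (\<lambda>a b. D a (\<lambda>a1 a2. D b (\<lambda>b1 b2. [(pa a1 (pa (S b2 * k1) m), act (a2 * S b1) (act k2 n))])))))"
    by (rule D_cong, rule tr_sym, rule collapse[where G="\<lambda>u v w. [(pa u (pa (S w * _) m), act v (act _ n))]"]; (intro D_par D_lin kerM kerN)?; simp add: lsimps)
  also have "R ... (D h (\<lambda>a b. D k (\<lambda>k1 k2. D a (\<lambda>a1 a2. D b (\<lambda>b1 b2. [(pa a1 (pa (S b2 * k1) m), act (a2 * S b1) (act k2 n))])))))"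
    by (rule D_swap)
  also have "R ... (D h (\<lambda>a b. D k (\<lambda>k1 k2. D b (\<lambda>b1 b2. D a (\<lambda>a1 a2. [(pa a1 (pa (S b2 * k1) m), act (a2 * S b1) (act k2 n))])))))"
    by (rule D_cong, rule D_cong, rule D_swap)
  also have "R ... (D h (\<lambda>a b. D b (\<lambda>b1 b2. D k (\<lambda>k1 k2. D a (\<lambda>a1 a2. [(pa a1 (pa (S b2 * k1) m), act a2 (act (S b1 * k2) n))])))))"
    by (rule D_cong, simp only: act_mul, rule D_swap)
  also have "R ... (D h (\<lambda>a b. D (S b) (\<lambda>c1 c2. D k (\<lambda>k1 k2. D a (\<lambda>a1 a2. [(pa a1 (pa (c1 * k1) m), act a2 (act (c2 * k2) n))])))))"
    by (rule D_cong, rule tr_sym, rule DS; (intro D_par D_lin kerM kerN)?; simp add: lsimps)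
  also have "R ... (D h (\<lambda>a b. T a (T (S b * k) [(m, n)])))"
    unfolding T_single T_D
    by (rule D_cong, rule tr_sym, rule D_mul; (intro D_par D_lin kerM kerN)?; simp add: lsimps)
  finally show ?thesis .
qed

lemma ax9_single: "R (D k (\<lambda>a b. T h (T (S a) (T b [(m, n)]))))
                     (D k (\<lambda>a b. T (h * S a) (T b [(m, n)])))"
proof -
  have "R (D k (\<lambda>a b. T h (T (S a) (T b [(m, n)]))))
     (D k (\<lambda>a b. D b (\<lambda>b1 b2. D a (\<lambda>a1 a2. D h (\<lambda>h1 h2. [(pa h1 (pa (S a2) (pa b1 m)), act h2 (act (S a1) (act b2 n)))])))))"
    unfolding T_single T_D
    by (rule D_cong, rule D_cong, rule DS; (intro D_par D_lin kerM kerN)?; simp add: lsimps)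
  also have "R ... (D k (\<lambda>y b2. D y (\<lambda>a1 z. D z (\<lambda>a2 b1. D h (\<lambda>h1 h2. [(pa h1 (pa (S a2) (pa b1 m)), act h2 (act (S a1) (act b2 n)))])))))"
    by (rule R4; (intro D_par D_lin kerM kerN)?; simp add: lsimps)
  also have "R ... (D k (\<lambda>y b2. D y (\<lambda>a1 z. D h (\<lambda>h1 h2. D z (\<lambda>a2 b1. [(pa h1 (pa (S a2) (pa b1 m)), act h2 (act (S a1) (act b2 n)))])))))"
    by (rule D_cong, rule D_cong, rule D_swap)
  also have "R ... (D k (\<lambda>y b2. D y (\<lambda>a1 z. D h (\<lambda>h1 h2. D z (\<lambda>a2 b1. [(pa (h1 * S a2) (pa b1 m), act h2 (act (S a1) (act b2 n)))])))))"
    by (rule D_cong, rule D_cong, rule D_cong, rule tr_trans[OF D_collect], simp only: pm9, rule tr_sym[OF D_collect])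
  also have "R ... (D k (\<lambda>y b2. D y (\<lambda>a1 z. D z (\<lambda>a2 b1. D h (\<lambda>h1 h2. [(pa (h1 * S a2) (pa b1 m), act (h2 * S a1) (act b2 n))])))))"
    by (rule D_cong, rule D_cong, simp only: act_mul, rule D_swap)
  also have "R ... (D k (\<lambda>a b. D b (\<lambda>b1 b2. D a (\<lambda>a1 a2. D h (\<lambda>h1 h2. [(pa (h1 * S a2) (pa b1 m), act (h2 * S a1) (act b2 n))])))))"
    by (rule tr_sym, rule R4; (intro D_par D_lin kerM kerN)?; simp add: lsimps)
  also have "R ... (D k (\<lambda>a b. D b (\<lambda>b1 b2. D (S a) (\<lambda>c1 c2. D h (\<lambda>h1 h2. [(pa (h1 * c1) (pa b1 m), act (h2 * c2) (act b2 n))])))))"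
    by (rule D_cong, rule D_cong, rule tr_sym, rule DS; (intro D_par D_lin kerM kerN)?; simp add: lsimps)
  also have "R ... (D k (\<lambda>a b. D b (\<lambda>b1 b2. D h (\<lambda>h1 h2. D (S a) (\<lambda>c1 c2. [(pa (h1 * c1) (pa b1 m), act (h2 * c2) (act b2 n))])))))"
    by (rule D_cong, rule D_cong, rule D_swap)
  also have "R ... (D k (\<lambda>a b. T (h * S a) (T b [(m, n)])))"
    unfolding T_single T_D
    by (rule D_cong, rule D_cong, rule tr_sym, rule D_mul; (intro D_par D_lin kerM kerN)?; simp add: lsimps)
  finally show ?thesis .
qed

lemma ax10_single: "R (D h (\<lambda>a b. T (S a) (T b (T k [(m, n)]))))
                      (D h (\<lambda>a b. T (S a) (T (b * k) [(m, n)])))"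
proof -
  have "R (D h (\<lambda>a b. T (S a) (T b (T k [(m, n)]))))
     (D h (\<lambda>a b. D k (\<lambda>k1 k2. D b (\<lambda>b1 b2. D a (\<lambda>a1 a2. [(pa (S a2) (pa b1 (pa k1 m)), act (S a1) (act b2 (act k2 n)))])))))"
    unfolding T_single T_D
    by (rule D_cong, rule D_cong, rule D_cong, rule DS; (intro D_par D_lin kerM kerN)?; simp add: lsimps)
  also have "R ... (D k (\<lambda>k1 k2. D h (\<lambda>a b. D b (\<lambda>b1 b2. D a (\<lambda>a1 a2. [(pa (S a2) (pa b1 (pa k1 m)), act (S a1) (act b2 (act k2 n)))])))))"
    by (rule D_swap)
  also have "R ... (D k (\<lambda>k1 k2. D h (\<lambda>y b2. D y (\<lambda>a1 z. D z (\<lambda>a2 b1. [(pa (S a2) (pa b1 (pa k1 m)), act (S a1) (act b2 (act k2 n)))])))))"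
    by (rule D_cong, rule R4; (intro D_par D_lin kerM kerN)?; simp add: lsimps)
  also have "R ... (D k (\<lambda>k1 k2. D h (\<lambda>y b2. D y (\<lambda>a1 z. D z (\<lambda>a2 b1. [(pa (S a2) (pa (b1 * k1) m), act (S a1) (act b2 (act k2 n)))])))))"
    by (rule D_cong, rule D_cong, rule D_cong, rule tr_trans[OF D_collect], simp only: pm10, rule tr_sym[OF D_collect])
  also have "R ... (D k (\<lambda>k1 k2. D h (\<lambda>a b. D b (\<lambda>b1 b2. D a (\<lambda>a1 a2. [(pa (S a2) (pa (b1 * k1) m), act (S a1) (act b2 (act k2 n)))])))))"
    by (rule D_cong, rule tr_sym, rule R4; (intro D_par D_lin kerM kerN)?; simp add: lsimps)
  also have "R ... (D h (\<lambda>a b. D k (\<lambda>k1 k2. D b (\<lambda>b1 b2. D a (\<lambda>a1 a2. [(pa (S a2) (pa (b1 * k1) m), act (S a1) (act b2 (act k2 n)))])))))"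
    by (rule D_swap)
  also have "R ... (D h (\<lambda>a b. D b (\<lambda>b1 b2. D k (\<lambda>k1 k2. D a (\<lambda>a1 a2. [(pa (S a2) (pa (b1 * k1) m), act (S a1) (act (b2 * k2) n))])))))"
    by (rule D_cong, simp only: act_mul, rule D_swap)
  also have "R ... (D h (\<lambda>a b. D b (\<lambda>b1 b2. D k (\<lambda>k1 k2. D (S a) (\<lambda>c1 c2. [(pa c1 (pa (b1 * k1) m), act c2 (act (b2 * k2) n))])))))"
    by (rule D_cong, rule D_cong, rule D_cong, rule tr_sym, rule DS; (intro D_par D_lin kerM kerN)?; simp add: lsimps)
  also have "R ... (D h (\<lambda>a b. T (S a) (T (b * k) [(m, n)])))"
    unfolding T_single T_D
    by (rule D_cong, rule tr_sym, rule D_mul; (intro D_par D_lin kerM kerN)?; simp add: lsimps)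
  finally show ?thesis .
qed

lemma vsum_concat: "vsum (@) [] xs = concat xs"
  unfolding vsum_def by (induction xs) auto

lemma T_list': "T h xs = concat (map (\<lambda>p. T h [p]) xs)"
  by (simp add: tens_act_def)

lemma T3_list: "T h (T a (T c xs)) = concat (map (\<lambda>p. T h (T a (T c [p]))) xs)"
proof -
  have "T c xs = concat (map (\<lambda>p. T c [p]) xs)" by (rule T_list')
  then show ?thesis by (simp add: T_concat comp_def)
qed
lemma T2_list: "T h (T a xs) = concat (map (\<lambda>p. T h (T a [p])) xs)"
proof -
  have "T a xs = concat (map (\<lambda>p. T a [p]) xs)" by (rule T_list')
  then show ?thesis by (simp add: T_concat comp_def)
qed

lemma D_fub: "R (D k (\<lambda>a b. concat (map (f a b) xs))) (concat (map (\<lambda>p. D k (\<lambda>a b. f a b p)) xs))"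
  unfolding D_def using tr_fubini[of scM scN "\<lambda>q p. f (fst q) (snd q) p" xs "delta k"]
  by (simp add: split_def)

lemma lift:
  assumes F: "\<And>a b. F a b xs = concat (map (\<lambda>p. F a b [p]) xs)"
    and G: "\<And>a b. G a b xs = concat (map (\<lambda>p. G a b [p]) xs)"
    and P: "\<And>m n. R (D k (\<lambda>a b. F a b [(m, n)])) (D k (\<lambda>a b. G a b [(m, n)]))"
  shows "R (D k (\<lambda>a b. F a b xs)) (D k (\<lambda>a b. G a b xs))"
proof -
  have "R (D k (\<lambda>a b. F a b xs)) (concat (map (\<lambda>p. D k (\<lambda>a b. F a b [p])) xs))"
    unfolding F by (rule D_fub)
  also have "R ... (concat (map (\<lambda>p. D k (\<lambda>a b. G a b [p])) xs))"
  proof (rule tr_concat_cong)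
    fix p show "R (D k (\<lambda>a b. F a b [p])) (D k (\<lambda>a b. G a b [p]))" using P[of "fst p" "snd p"] by simp
  qed
  also have "R ... (D k (\<lambda>a b. G a b xs))"
    unfolding G by (rule tr_sym, rule D_fub)
  finally show ?thesis .
qed

lemma concat_map_Nil: "concat (map (\<lambda>p. []) l) = []" by (induction l) auto
lemma concat_map_single: "concat (map (\<lambda>p. [p]) l) = l" by (induction l) auto

lemma pa_zero: "pa a 0 = 0"
  using pa_addR[of a 0 0] by simp

lemma main: "partial_module scH delta S (@) [] (tens_scale scM) (tens_rel scM scN) T"
  unfolding partial_module_def
proof (intro conjI allI impI)
  fix h x y assume xy: "R x y"
  have "R (concat (map (\<lambda>(m, n). T h [(m, n)]) x)) (concat (map (\<lambda>(m, n). T h [(m, n)]) y))"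
  proof (rule tr_transfer[OF xy])
    show "R (T h [(a + a', b)]) (T h [(a, b)] @ T h [(a', b)])" for a a' b
      unfolding T_single pa_addR by (rule tr_trans[OF D_cong D_append]) (simp add: tr_addL)
    show "R (T h [(a, b + b')]) (T h [(a, b)] @ T h [(a, b')])" for a b b'
      unfolding T_single act_addR by (rule tr_trans[OF D_cong D_append]) (simp add: tr_addR)
    show "R (T h [(0, b)]) []" for b
    proof -
      have "R (T h [(0, b)]) (D h (\<lambda>x y. []))"
        unfolding T_single pa_zero by (rule D_cong, rule tr_zero)
      then show ?thesis by (simp add: D_def split_def concat_map_Nil)
    qed
    show "R (T h [(scM c a, b)]) (T h [(a, scN c b)])" for c a b
      unfolding T_single pa_scR act_scR by (rule D_cong, rule tr_scal)
  qed
  then show "R (T h x) (T h y)" by (simp only: T_list[symmetric])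
next
  fix h x y show "R (T h (x @ y)) (T h x @ T h y)" by (simp add: T_append tr_refl)
next
  fix h c x show "R (T h (tens_scale scM c x)) (tens_scale scM c (T h x))"
    by (simp add: tens_act_def tens_scale_def pa_scR split_def map_concat comp_def tr_refl)
next
  fix a b x
  have e: "R (T (a + b) [p]) (T a [p] @ T b [p])" for p
  proof -
    obtain m n where "p = (m, n)" by (cases p)
    then show ?thesis by (simp only: T_single) (rule D_add; (intro D_par D_lin kerM kerN)?; simp add: lsimps)
  qed
  have "T (a + b) x = concat (map (\<lambda>p. T (a + b) [p]) x)" by (rule T_list')
  also have "R ... (concat (map (\<lambda>p. T a [p] @ T b [p]) x))" by (rule tr_concat_cong, rule e)
  also have "R ... (concat (map (\<lambda>p. T a [p]) x) @ concat (map (\<lambda>p. T b [p]) x))" by (rule tr_concat_append)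
  also have "... = T a x @ T b x" by (simp only: T_list'[symmetric])
  finally show "R (T (a + b) x) (T a x @ T b x)" .
next
  fix c a x
  have e: "R (T (scH c a) [p]) (tens_scale scM c (T a [p]))" for p
  proof -
    obtain m n where "p = (m, n)" by (cases p)
    then show ?thesis by (simp only: T_single) (rule D_sc; (intro D_par D_lin kerM kerN)?; simp add: lsimps)
  qed
  have "T (scH c a) x = concat (map (\<lambda>p. T (scH c a) [p]) x)" by (rule T_list')
  also have "R ... (concat (map (\<lambda>p. tens_scale scM c (T a [p])) x))" by (rule tr_concat_cong, rule e)
  also have "... = tens_scale scM c (T a x)" by (simp only: T_list'[of a x] ts_concat map_map comp_def)
  finally show "R (T (scH c a) x) (tens_scale scM c (T a x))" .
next
  fix x
  have e: "R (T 1 [p]) [p]" for p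
  proof -
    obtain m n where p: "p = (m, n)" by (cases p)
    have "R (T 1 [(m, n)]) [(pa 1 m, act 1 n)]" by (simp only: T_single) (rule D_one; (intro D_par D_lin kerM kerN)?; simp add: lsimps)
    then show ?thesis by (simp add: p pa_one act_one)
  qed
  have "T 1 x = concat (map (\<lambda>p. T 1 [p]) x)" by (rule T_list')
  also have "R ... (concat (map (\<lambda>p. [p]) x))" by (rule tr_concat_cong, rule e)
  also have "... = x" by (rule concat_map_single)
  finally show "R (T 1 x) x" .
next
  fix h k x
  show "R (vsum (@) [] (map (\<lambda>(a, b). T h (T a (T (S b) x))) (delta k)))
          (vsum (@) [] (map (\<lambda>(a, b). T (h * a) (T (S b) x)) (delta k)))"
    unfolding vsum_concat D_def[symmetric]
    by (rule lift[where F="\<lambda>a b xs. T h (T a (T (S b) xs))" and G="\<lambda>a b xs. T (h * a) (T (S b) xs)"],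
        rule T3_list, rule T2_list, rule ax7_single)
next
  fix h k x
  show "R (vsum (@) [] (map (\<lambda>(a, b). T a (T (S b) (T k x))) (delta h)))
          (vsum (@) [] (map (\<lambda>(a, b). T a (T (S b * k) x)) (delta h)))"
    unfolding vsum_concat D_def[symmetric]
    by (rule lift[where F="\<lambda>a b xs. T a (T (S b) (T k xs))" and G="\<lambda>a b xs. T a (T (S b * k) xs)"],
        rule T3_list, rule T2_list, rule ax8_single)
next
  fix h k x
  show "R (vsum (@) [] (map (\<lambda>(a, b). T h (T (S a) (T b x))) (delta k)))
          (vsum (@) [] (map (\<lambda>(a, b). T (h * S a) (T b x)) (delta k)))"
    unfolding vsum_concat D_def[symmetric]
    by (rule lift[where F="\<lambda>a b xs. T h (T (S a) (T b xs))" and G="\<lambda>a b xs. T (h * S a) (T b xs)"],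
        rule T3_list, rule T2_list, rule ax9_single)
next
  fix h k x
  show "R (vsum (@) [] (map (\<lambda>(a, b). T (S a) (T b (T k x))) (delta h)))
          (vsum (@) [] (map (\<lambda>(a, b). T (S a) (T (b * k) x)) (delta h)))"
    unfolding vsum_concat D_def[symmetric]
    by (rule lift[where F="\<lambda>a b xs. T (S a) (T b (T k xs))" and G="\<lambda>a b xs. T (S a) (T (b * k) xs)"],
        rule T3_list, rule T2_list, rule ax10_single)
qed

end

theorem mainTheorem16:
  fixes scH :: "'k::field \<Rightarrow> 'h::ring_1 \<Rightarrow> 'h"
    and delta :: "'h \<Rightarrow> ('h \<times> 'h) list"
    and eps :: "'h \<Rightarrow> 'k"
    and S :: "'h \<Rightarrow> 'h"
    and scM :: "'k \<Rightarrow> 'm::ab_group_add \<Rightarrow> 'm"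
    and pa :: "'h \<Rightarrow> 'm \<Rightarrow> 'm"
    and scN :: "'k \<Rightarrow> 'n::ab_group_add \<Rightarrow> 'n"
    and act :: "'h \<Rightarrow> 'n \<Rightarrow> 'n"
  assumes "hopf_algebra scH delta eps S"
    and "bij S"
    and "vector_space scM"
    and "partial_module scH delta S (+) 0 scM (=) pa"
    and "left_module scH scN act"
  shows "partial_module scH delta S (@) [] (tens_scale scM) (tens_rel scM scN)
           (tens_act delta pa act)"
  proof -
  interpret pmt scH delta eps S scM pa scN act
    by (rule pmt.intro[OF assms(1) assms(3) assms(4) assms(5)])
  show ?thesis by (rule main)
qed

end
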